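(* Let $G$ be an $(n,n,p_s,p_d)$-two-island network with groups $V_1,V_2$ and degree of homophily $h_G=p_s/p_d$, and let the dual opinions evolve according to the dynamics in the context with common resilience $\phi\in(0,1)$, common bias parameter $b$ satisfying $\frac{2}{\phi(h_G-1)+2}<b<1$, and the symmetric initial condition $x_i(0)=x_0\in(\tfrac12,1)$, $y_i(0)=y_0\in[\tfrac12,x_0]$ for $i\in V_1$ and $x_j(0)=1-x_0$, $y_j(0)=1-y_0$ for $j\in V_2$. Then for every $i\in V_1$ there exists $\tau>0$ such that $x_i(t)$ and $y_i(t)$ are monotonic for $t>\tau$, and $$\lim_{t\to\infty}x_i(t)=\hat x(\phi,h_G,b),\qquad \lim_{t\to\infty}y_i(t)=\frac{\phi(h_G+1)\hat x(\phi,h_G,b)+1-\phi}{\phi h_G+2-\phi}.$$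
   Context: Let $n\ge 1$ and $p_s,p_d\in(0,1)$ with $p_s>p_d$ and $np_s,np_d$ positive integers. An $(n,n,p_s,p_d)$-two-island network is an undirected graph (no self-loops) with vertex set $V=V_1\cup V_2$, $V_1\cap V_2=\emptyset$, $|V_1|=|V_2|=n$, such that each node of $V_1$ has exactly $np_s$ neighbours in $V_1$ and $np_d$ neighbours in $V_2$, and each node of $V_2$ has exactly $np_s$ neighbours in $V_2$ and $np_d$ neighbours in $V_1$. Its degree of homophily is $h_G=p_s/p_d>1$. Let $w_{ij}\in\{0,1\}$ be the adjacency matrix, $N_i$ the set of neighbours of $i$, and $d_i=\sum_{j\in N_i}w_{ij}$. Dual opinions dynamics: each individual $i\in V$ has an implicit opinion $x_i(t)\in[0,1]$ and an explicit opinion $y_i(t)\in[0,1]$, $t=0,1,2,\dots$, updated by $$x_i(t+1)=\frac{x_i(t)^{b}s_i(t)}{x_i(t)^{b}s_i(t)+(1-x_i(t))^{b}(d_i-s_i(t))},\qquad y_i(t+1)=\phi\, x_i(t+1)+(1-\phi)\hat y_{i,avg}(t),$$ where $s_i(t)=\sum_{j\in N_i}w_{ij}y_j(t)$ and $\hat y_{i,avg}(t)=\sum_{j\in N_i}\frac{w_{ij}}{d_i}y_j(t)$. For $0<b<1$ define $g(x,b)=\frac{x^{1-b}-(1-x)^{1-b}}{x(1-x)^{1-b}-(1-x)x^{1-b}}$ for $x\in(\tfrac12,1)$ and $g(\tfrac12,b)=\frac2b-2$. When $\frac{2}{\phi(h_G-1)+2}<b<1$, $\hat x(\phi,h_G,b)$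 denotes the unique solution $x\in(\tfrac12,1)$ of $g(x,b)=\phi(h_G-1)$. *)

theory Defs
  imports "HOL-Analysis.Analysis"
begin

definition nbrs :: "('a \<Rightarrow> 'a \<Rightarrow> bool) \<Rightarrow> 'a set \<Rightarrow> 'a \<Rightarrow> 'a set" where
  "nbrs E V i = {j \<in> V. E i j}"

definition two_island ::
  "('a \<Rightarrow> 'a \<Rightarrow> bool) \<Rightarrow> 'a set \<Rightarrow> 'a set \<Rightarrow> nat \<Rightarrow> real \<Rightarrow> real \<Rightarrow> bool" where
  "two_island E V1 V2 n ps pd \<longleftrightarrow>
     n \<ge> 1 \<and> 0 < pd \<and> pd < ps \<and> ps < 1 \<and>
     (\<exists>k::nat. k > 0 \<and> real n * ps = real k) \<and>
     (\<exists>k::nat. k > 0 \<and> real n * pd = real k) \<and>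
     finite V1 \<and> finite V2 \<and> V1 \<inter> V2 = {} \<and> card V1 = n \<and> card V2 = n \<and>
     (\<forall>i j. E i j \<longrightarrow> E j i) \<and> (\<forall>i. \<not> E i i) \<and>
     (\<forall>i j. E i j \<longrightarrow> i \<in> V1 \<union> V2 \<and> j \<in> V1 \<union> V2) \<and>
     (\<forall>i\<in>V1. real (card (nbrs E V1 i)) = real n * ps \<and>
               real (card (nbrs E V2 i)) = real n * pd) \<and>
     (\<forall>i\<in>V2. real (card (nbrs E V2 i)) = real n * ps \<and>
               real (card (nbrs E V1 i)) = real n * pd)"

text \<open>Dual opinions dynamics on vertex set V (adjacency weights w_ij in {0,1}).\<close>

definition dual_opinion_dynamics ::
  "('a \<Rightarrow> 'a \<Rightarrow> bool) \<Rightarrow> 'a set \<Rightarrow> real \<Rightarrow> real \<Rightarrow>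
   (nat \<Rightarrow> 'a \<Rightarrow> real) \<Rightarrow> (nat \<Rightarrow> 'a \<Rightarrow> real) \<Rightarrow> bool" where
  "dual_opinion_dynamics E V b \<phi> x y \<longleftrightarrow>
     (\<forall>t. \<forall>i\<in>V.
        let N = nbrs E V i;
            d = real (card N);
            s = (\<Sum>j\<in>N. y t j)
        in x (Suc t) i = (x t i powr b * s) /
                           (x t i powr b * s + (1 - x t i) powr b * (d - s)) \<and>
           y (Suc t) i = \<phi> * x (Suc t) i + (1 - \<phi>) * (s / d))"

definition g_fun :: "real \<Rightarrow> real \<Rightarrow> real" where
  "g_fun x b = (if x = 1/2 then 2 / b - 2
     else (x powr (1 - b) - (1 - x) powr (1 - b)) /
          (x * (1 - x) powr (1 - b) - (1 - x) * x powr (1 - b)))"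

definition x_hat :: "real \<Rightarrow> real \<Rightarrow> real \<Rightarrow> real" where
  "x_hat \<phi> h b = (THE x. 1/2 < x \<and> x < 1 \<and> g_fun x b = \<phi> * (h - 1))"

end

theory Submission
  imports Defs
begin


definition Lo :: "real \<Rightarrow> real" where "Lo z = ln z - ln (1 - z)"
definition Fm :: "real \<Rightarrow> real \<Rightarrow> real \<Rightarrow> real" where
  "Fm b X a = X powr b * a / (X powr b * a + (1 - X) powr b * (1 - a))"
definition av :: "real \<Rightarrow> real \<Rightarrow> real \<Rightarrow> real" where
  "av ps pd Y = (ps * Y + pd * (1 - Y)) / (ps + pd)"

lemma Fm_pos:
  assumes "0 < X" "X < 1" "0 < a" "a < 1"
  shows "0 < Fm b X a" "Fm b X a < 1" "1 - Fm b X a = (1 - X) powr b * (1 - a) / (X powr b * a + (1 - X) powr b * (1 - a))"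
proof -
  have p1: "X powr b * a > 0" using assms by simp
  have p2: "(1 - X) powr b * (1 - a) > 0" using assms by simp
  show "0 < Fm b X a" unfolding Fm_def using p1 p2 by simp
  show "Fm b X a < 1" unfolding Fm_def using p1 p2 by simp
  show "1 - Fm b X a = (1 - X) powr b * (1 - a) / (X powr b * a + (1 - X) powr b * (1 - a))"
    unfolding Fm_def using p1 p2 by (simp add: field_simps)
qed

lemma Lo_Fm:
  assumes "0 < X" "X < 1" "0 < a" "a < 1"
  shows "Lo (Fm b X a) = b * Lo X + Lo a"
proof -
  define D where "D = X powr b * a + (1 - X) powr b * (1 - a)"
  have D: "D > 0" unfolding D_def using assms by (simp add: add_pos_pos)
  have "Lo (Fm b X a) = ln (X powr b * a / D) - ln ((1 - X) powr b * (1 - a) / D)"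
    unfolding Lo_def using Fm_pos(3)[OF assms, of b] by (simp add: Fm_def D_def)
  also have "\<dots> = ln (X powr b) + ln a - ln ((1 - X) powr b) - ln (1 - a)"
    using assms D by (simp add: ln_div ln_mult)
  also have "\<dots> = b * Lo X + Lo a" unfolding Lo_def using assms by (simp add: ln_powr algebra_simps)
  finally show ?thesis .
qed

lemma Lo_less: assumes "0 < u" "u < v" "v < 1" shows "Lo u < Lo v"
proof -
  have "ln u < ln v" using assms by simp
  moreover have "ln (1 - v) < ln (1 - u)" using assms by simp
  ultimately show ?thesis unfolding Lo_def by simp
qed

lemma Lo_le_iff: assumes "0 < u" "u < 1" "0 < v" "v < 1" shows "Lo u \<le> Lo v \<longleftrightarrow> u \<le> v"
proof
  assume "Lo u \<le> Lo v" thus "u \<le> v" using Lo_less[of v u] assms by (meson not_le)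
next
  assume "u \<le> v" thus "Lo u \<le> Lo v" using Lo_less[of u v] assms by (cases "u = v") auto
qed

lemma Lo_inj: assumes "0 < u" "u < 1" "0 < v" "v < 1" "Lo u = Lo v" shows "u = v"
  using Lo_le_iff[OF assms(1-4)] Lo_le_iff[OF assms(3,4,1,2)] assms(5) by auto

lemma Lo_half[simp]: "Lo (1/2) = 0" unfolding Lo_def by simp

lemma Fm_mono:
  assumes "0 < X1" "X1 \<le> X2" "X2 < 1" "0 < a1" "a1 \<le> a2" "a2 < 1" "0 < b"
  shows "Fm b X1 a1 \<le> Fm b X2 a2"
proof -
  have "Lo X1 \<le> Lo X2" "Lo a1 \<le> Lo a2" using assms Lo_le_iff by auto
  hence "b * Lo X1 + Lo a1 \<le> b * Lo X2 + Lo a2" using assms by (simp add: add_mono)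
  hence "Lo (Fm b X1 a1) \<le> Lo (Fm b X2 a2)" using assms by (simp add: Lo_Fm)
  moreover have "0 < Fm b X1 a1" "Fm b X1 a1 < 1" using Fm_pos[of X1 a1 b] assms by auto
  moreover have "0 < Fm b X2 a2" "Fm b X2 a2 < 1" using Fm_pos[of X2 a2 b] assms by auto
  ultimately show ?thesis using Lo_le_iff by blast
qed

lemma mono_from:
  fixes f :: "nat \<Rightarrow> real"
  assumes "\<forall>t\<ge>T. f t \<le> f (Suc t)" "T \<le> r" "r \<le> s" shows "f r \<le> f s"
  using assms(3)
proof (induction s)
  case 0 thus ?case by simp
next
  case (Suc s)
  show ?case
  proof (cases "r = Suc s")
    case False
    hence "r \<le> s" using Suc by simp
    thus ?thesis using Suc assms(1,2) by (meson dual_order.trans)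
  qed simp
qed

lemma antimono_from:
  fixes f :: "nat \<Rightarrow> real"
  assumes "\<forall>t\<ge>T. f (Suc t) \<le> f t" "T \<le> r" "r \<le> s" shows "f s \<le> f r"
  using mono_from[of T "\<lambda>t. - f t" r s] assms by simp

lemma eventually_monotone_pair:
  fixes X Y :: "nat \<Rightarrow> real"
  assumes up: "\<And>t. X t \<le> X (Suc t) \<Longrightarrow> Y t \<le> Y (Suc t) \<Longrightarrow> X (Suc t) \<le> X (Suc (Suc t)) \<and> Y (Suc t) \<le> Y (Suc (Suc t))"
    and down: "\<And>t. X (Suc t) \<le> X t \<Longrightarrow> Y (Suc t) \<le> Y t \<Longrightarrow> X (Suc (Suc t)) \<le> X (Suc t) \<and> Y (Suc (Suc t)) \<le> Y (Suc t)"
    and rel: "\<And>t. Y (Suc (Suc t)) - Y (Suc t) = \<phi> * (X (Suc (Suc t)) - X (Suc t)) + \<kappa> * (Y (Suc t) - Y t)"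
    and pos: "0 < \<phi>" "0 < \<kappa>"
  shows "\<exists>T. ((\<forall>t\<ge>T. X t \<le> X (Suc t)) \<or> (\<forall>t\<ge>T. X (Suc t) \<le> X t)) \<and>
             ((\<forall>t\<ge>T. Y t \<le> Y (Suc t)) \<or> (\<forall>t\<ge>T. Y (Suc t) \<le> Y t))"
proof (cases "\<exists>t. (X t \<le> X (Suc t) \<and> Y t \<le> Y (Suc t)) \<or> (X (Suc t) \<le> X t \<and> Y (Suc t) \<le> Y t)")
  case True
  then obtain T where T: "(X T \<le> X (Suc T) \<and> Y T \<le> Y (Suc T)) \<or> (X (Suc T) \<le> X T \<and> Y (Suc T) \<le> Y T)" by blast
  thus ?thesis
  proof
    assume h: "X T \<le> X (Suc T) \<and> Y T \<le> Y (Suc T)"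
    have "\<forall>t\<ge>T. X t \<le> X (Suc t) \<and> Y t \<le> Y (Suc t)"
    proof (intro allI impI)
      fix t assume "T \<le> t" thus "X t \<le> X (Suc t) \<and> Y t \<le> Y (Suc t)"
      proof (induction t rule: dec_induct)
        case base then show ?case using h by simp
      next
        case (step m) then show ?case using up by blast
      qed
    qed
    thus ?thesis by blast
  next
    assume h: "X (Suc T) \<le> X T \<and> Y (Suc T) \<le> Y T"
    have "\<forall>t\<ge>T. X (Suc t) \<le> X t \<and> Y (Suc t) \<le> Y t"
    proof (intro allI impI)
      fix t assume "T \<le> t" thus "X (Suc t) \<le> X t \<and> Y (Suc t) \<le> Y t"
      proof (induction t rule: dec_induct)
        case base then show ?case using h by simp
      next
        case (step m) then show ?case using down by blast
      qed
    qed
    thus ?thesis by blast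
  qed
next
  case False
  have F: "(X t < X (Suc t) \<and> Y (Suc t) < Y t) \<or> (X (Suc t) < X t \<and> Y t < Y (Suc t))" for t
  proof -
    have "\<not> ((X t \<le> X (Suc t) \<and> Y t \<le> Y (Suc t)) \<or> (X (Suc t) \<le> X t \<and> Y (Suc t) \<le> Y t))"
      using False by blast
    thus ?thesis by linarith
  qed
  have pers: "(X t < X (Suc t) \<and> Y (Suc t) < Y t) \<longleftrightarrow> (X (Suc t) < X (Suc (Suc t)) \<and> Y (Suc (Suc t)) < Y (Suc t))" for t
  proof -
    have r: "Y (Suc (Suc t)) - Y (Suc t) = \<phi> * (X (Suc (Suc t)) - X (Suc t)) + \<kappa> * (Y (Suc t) - Y t)" by (rule rel)
    have a: "X t < X (Suc t) \<and> Y (Suc t) < Y t \<Longrightarrow> X (Suc t) < X (Suc (Suc t)) \<and> Y (Suc (Suc t)) < Y (Suc t)"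
    proof (rule ccontr)
      assume h1: "X t < X (Suc t) \<and> Y (Suc t) < Y t" and h2: "\<not> (X (Suc t) < X (Suc (Suc t)) \<and> Y (Suc (Suc t)) < Y (Suc t))"
      hence h3: "X (Suc (Suc t)) < X (Suc t) \<and> Y (Suc t) < Y (Suc (Suc t))" using F[of "Suc t"] by auto
      have "\<phi> * (X (Suc (Suc t)) - X (Suc t)) < 0" using h3 pos by (simp add: mult_pos_neg)
      moreover have "\<kappa> * (Y (Suc t) - Y t) < 0" using h1 pos by (simp add: mult_pos_neg)
      ultimately show False using r h3 by linarith
    qed
    have b: "X (Suc t) < X t \<and> Y t < Y (Suc t) \<Longrightarrow> X (Suc (Suc t)) < X (Suc t) \<and> Y (Suc t) < Y (Suc (Suc t))"
    proof (rule ccontr)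
      assume h1: "X (Suc t) < X t \<and> Y t < Y (Suc t)" and h2: "\<not> (X (Suc (Suc t)) < X (Suc t) \<and> Y (Suc t) < Y (Suc (Suc t)))"
      hence h3: "X (Suc t) < X (Suc (Suc t)) \<and> Y (Suc (Suc t)) < Y (Suc t)" using F[of "Suc t"] by auto
      have "\<phi> * (X (Suc (Suc t)) - X (Suc t)) > 0" using h3 pos by simp
      moreover have "\<kappa> * (Y (Suc t) - Y t) > 0" using h1 pos by simp
      ultimately show False using r h3 by linarith
    qed
    show ?thesis using a b F[of t] F[of "Suc t"] by auto
  qed
  have all: "(X t < X (Suc t) \<and> Y (Suc t) < Y t) \<longleftrightarrow> (X 0 < X (Suc 0) \<and> Y (Suc 0) < Y 0)" for t
    by (induction t) (use pers in auto)
  show ?thesis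
  proof (cases "X 0 < X (Suc 0) \<and> Y (Suc 0) < Y 0")
    case True
    hence "\<forall>t\<ge>0. X t \<le> X (Suc t)" "\<forall>t\<ge>0. Y (Suc t) \<le> Y t" using all by (auto intro: less_imp_le)
    thus ?thesis by blast
  next
    case False
    hence "X (Suc t) < X t \<and> Y t < Y (Suc t)" for t using all[of t] F[of t] by auto
    hence "\<forall>t\<ge>0. X (Suc t) \<le> X t" "\<forall>t\<ge>0. Y t \<le> Y (Suc t)" by (auto intro: less_imp_le)
    thus ?thesis by blast
  qed
qed

definition Dfun :: "real \<Rightarrow> real \<Rightarrow> real \<Rightarrow> real" where
  "Dfun c \<beta> x = ln (1 + c * x) - ln (1 + c * (1 - x)) - \<beta> * (ln x - ln (1 - x))"

lemma Dfun_deriv: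
  assumes "0 < c" "0 < x" "x < 1"
  shows "(Dfun c \<beta> has_real_derivative
     (c / (1 + c * x) + c / (1 + c * (1 - x)) - \<beta> / x - \<beta> / (1 - x))) (at x)"
proof -
  have "1 - x > 0" using assms by simp
  have "c * x > 0" using assms by simp
  have "c * (1 - x) > 0" using assms by simp
  have e1: "c * (1 - x) = c - c * x" by (simp add: algebra_simps)
  have nz: "1 + c * x \<noteq> 0" "1 + c - c * x \<noteq> 0" "1 + c * (1 - x) \<noteq> 0" "1 - x \<noteq> 0" "x \<noteq> 0"
    "1 + c * x > 0" "1 + c - c * x > 0" "1 + c * (1 - x) > 0" "c * x < 1 + c"
    using assms e1 \<open>c * x > 0\<close> \<open>c * (1 - x) > 0\<close> by linarith+
  show ?thesis unfolding Dfun_def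
    apply (auto intro!: derivative_eq_intros simp: field_simps)
    using assms nz by (auto simp: field_simps)
qed

lemma Dfun_crit:
  fixes c x \<beta> :: real
  assumes "0 < c" "0 < x" "x < 1"
    and "c / (1 + c * x) + c / (1 + c * (1 - x)) - \<beta> / x - \<beta> / (1 - x) = 0"
  shows "x * (1 - x) * (c * (2 + c) - \<beta> * c^2) = \<beta> * (1 + c)"
proof -
  have "1 - x > 0" using assms by simp
  have "c * x > 0" using assms by simp
  have "c * (1 - x) > 0" using assms by simp
  note \<open>c * x > 0\<close> \<open>c * (1 - x) > 0\<close>
  hence A: "1 + c * x > 0" and B: "1 + c * (1 - x) > 0" by auto
  have e: "c / (1 + c * x) + c / (1 + c * (1 - x)) = c * (2 + c) / ((1 + c * x) * (1 + c * (1 - x)))"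
    using A B by (simp add: field_simps)
  have f: "\<beta> / x + \<beta> / (1 - x) = \<beta> / (x * (1 - x))"
    using assms by (simp add: field_simps)
  have "c * (2 + c) / ((1 + c * x) * (1 + c * (1 - x))) = \<beta> / (x * (1 - x))"
    using assms(4) e f by (simp add: algebra_simps)
  hence "c * (2 + c) * (x * (1 - x)) = \<beta> * ((1 + c * x) * (1 + c * (1 - x)))"
    using A B assms by (simp add: frac_eq_eq)
  thus ?thesis by (simp add: algebra_simps power2_eq_square)
qed

lemma Dfun_unique_lt:
  assumes c: "0 < c" and be: "0 < \<beta>" and x: "1/2 < x1" "x1 < x2" "x2 < 1"
    and D: "Dfun c \<beta> x1 = 0" "Dfun c \<beta> x2 = 0"
  shows False
proof -
  define D' where "D' x = c / (1 + c * x) + c / (1 + c * (1 - x)) - \<beta> / x - \<beta> / (1 - x)" for x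
  have D0: "Dfun c \<beta> (1/2) = 0" unfolding Dfun_def by simp
  obtain z1 where z1: "1/2 < z1" "z1 < x1" "Dfun c \<beta> x1 - Dfun c \<beta> (1/2) = (x1 - 1/2) * D' z1"
    using MVT2[of "1/2" x1 "Dfun c \<beta>" D'] x c Dfun_deriv unfolding D'_def by force
  obtain z2 where z2: "x1 < z2" "z2 < x2" "Dfun c \<beta> x2 - Dfun c \<beta> x1 = (x2 - x1) * D' z2"
    using MVT2[of x1 x2 "Dfun c \<beta>" D'] x c Dfun_deriv unfolding D'_def by force
  have "D' z1 = 0" using z1 D D0 x by simp
  hence e1: "z1 * (1 - z1) * (c * (2 + c) - \<beta> * c^2) = \<beta> * (1 + c)"
    using Dfun_crit[of c z1 \<beta>] c z1 x unfolding D'_def by simp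
  have "D' z2 = 0" using z2 D x by simp
  hence e2: "z2 * (1 - z2) * (c * (2 + c) - \<beta> * c^2) = \<beta> * (1 + c)"
    using Dfun_crit[of c z2 \<beta>] c z2 x unfolding D'_def by simp
  have w: "z2 * (1 - z2) < z1 * (1 - z1)"
  proof -
    have "z1 * (1 - z1) - z2 * (1 - z2) = (z2 - z1) * (z2 + z1 - 1)" by (simp add: algebra_simps)
    moreover have "(z2 - z1) * (z2 + z1 - 1) > 0" using z1 z2 by (intro mult_pos_pos) auto
    ultimately show ?thesis by simp
  qed
  have "(z1 * (1 - z1) - z2 * (1 - z2)) * (c * (2 + c) - \<beta> * c^2) = 0"
    using e1 e2 by (simp add: algebra_simps)
  hence "c * (2 + c) - \<beta> * c^2 = 0" using w by simp
  hence "\<beta> * (1 + c) = 0" using e1 by simp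
  thus False using be c by simp
qed

lemma Dfun_unique:
  assumes "0 < c" "0 < \<beta>" "1/2 < x1" "x1 < 1" "1/2 < x2" "x2 < 1"
    and "Dfun c \<beta> x1 = 0" "Dfun c \<beta> x2 = 0"
  shows "x1 = x2"
  using Dfun_unique_lt[of c \<beta> x1 x2] Dfun_unique_lt[of c \<beta> x2 x1] assms
  by (cases x1 x2 rule: linorder_cases) auto

lemma g_fun_iff:
  assumes "0 < b" "b < 1" "1/2 < x" "x < 1" "0 < c"
  shows "g_fun x b = c \<longleftrightarrow> Dfun c (1 - b) x = 0"
proof -
  have x0: "x \<noteq> 1/2" using assms by simp
  have pos: "0 < x" "0 < 1 - x" using assms by auto
  have "(1 - x) powr b < x powr b" using assms by (intro powr_less_mono2) auto
  have den: "x * (1 - x) powr (1 - b) - (1 - x) * x powr (1 - b) > 0"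
  proof -
    have "x = x powr b * x powr (1 - b)" using pos by (simp add: powr_add[symmetric])
    moreover have "1 - x = (1 - x) powr b * (1 - x) powr (1 - b)" using pos by (simp add: powr_add[symmetric])
    ultimately have "x * (1 - x) powr (1 - b) - (1 - x) * x powr (1 - b)
       = (x powr b - (1 - x) powr b) * (x powr (1 - b) * (1 - x) powr (1 - b))"
      by (metis (no_types, lifting) mult.commute mult.left_commute right_diff_distrib')
    moreover have "x powr b - (1 - x) powr b > 0" using \<open>(1 - x) powr b < x powr b\<close> by simp
    moreover have "x powr (1 - b) * (1 - x) powr (1 - b) > 0" using pos by simp
    ultimately show ?thesis by simp
  qed
  have p1: "1 + c * x > 0" "1 + c * (1 - x) > 0" using assms pos by (auto intro: add_pos_nonneg)
  have "g_fun x b = c \<longleftrightarrow> x powr (1 - b) - (1 - x) powr (1 - b) = c * (x * (1 - x) powr (1 - b) - (1 - x) * x powr (1 - b))"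
    unfolding g_fun_def using x0 den by (simp add: divide_eq_eq)
  also have "\<dots> \<longleftrightarrow> x powr (1 - b) * (1 + c * (1 - x)) = (1 - x) powr (1 - b) * (1 + c * x)"
    by (simp add: algebra_simps)
  also have "\<dots> \<longleftrightarrow> ln (x powr (1 - b) * (1 + c * (1 - x))) = ln ((1 - x) powr (1 - b) * (1 + c * x))"
    using pos p1 by simp
  also have "\<dots> \<longleftrightarrow> (1 - b) * ln x + ln (1 + c * (1 - x)) = (1 - b) * ln (1 - x) + ln (1 + c * x)"
    using pos p1 by (simp add: ln_mult ln_powr)
  also have "\<dots> \<longleftrightarrow> Dfun c (1 - b) x = 0"
    unfolding Dfun_def by (auto simp: algebra_simps)
  finally show ?thesis .
qed




lemma tendsto_Lo:
  assumes "(f \<longlongrightarrow> L) F" "0 < L" "L < 1"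
  shows "((\<lambda>n. Lo (f n)) \<longlongrightarrow> Lo L) F"
proof -
  have "((\<lambda>n. 1 - f n) \<longlongrightarrow> 1 - L) F" by (intro tendsto_diff tendsto_const assms(1))
  hence "((\<lambda>n. ln (1 - f n)) \<longlongrightarrow> ln (1 - L)) F" using assms by (intro tendsto_ln) auto
  moreover have "((\<lambda>n. ln (f n)) \<longlongrightarrow> ln L) F" using assms by (intro tendsto_ln) auto
  ultimately show ?thesis unfolding Lo_def by (intro tendsto_diff)
qed

lemma Lo_pos: assumes "1/2 < u" "u < 1" shows "0 < Lo u"
  using Lo_less[of "1/2" u] assms by simp

lemma Lo_deriv_half: "(Lo has_real_derivative 4) (at (1/2))"
proof -
  have "(Lo has_real_derivative (1 / (1/2) + 1 / (1 - 1/2))) (at (1/2))"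
    unfolding Lo_def[abs_def] by (auto intro!: derivative_eq_intros)
  thus ?thesis by simp
qed

definition rho :: "real \<Rightarrow> real" where "rho p = Lo (1/2 + p) / (4 * p)"

lemma rho_lim: "(rho \<longlongrightarrow> 1) (at_right 0)"
proof -
  have "((\<lambda>h. (Lo (1/2 + h) - Lo (1/2)) / h) \<longlongrightarrow> 4) (at 0)"
    using Lo_deriv_half unfolding DERIV_def by simp
  hence "((\<lambda>h. (Lo (1/2 + h) - Lo (1/2)) / h / 4) \<longlongrightarrow> 4 / 4) (at 0)"
    by (intro tendsto_divide) auto
  hence "(rho \<longlongrightarrow> 1) (at 0)" unfolding rho_def by (simp add: field_simps)
  thus ?thesis by (rule tendsto_mono[OF at_le, rotated]) simp
qed

lemma rho_eq: assumes "p \<noteq> 0" shows "Lo (1/2 + p) = 4 * p * rho p"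
  unfolding rho_def using assms by simp

lemma rho_pos: assumes "0 < p" "p < 1/2" shows "0 < rho p"
  unfolding rho_def using Lo_pos[of "1/2 + p"] assms by simp

lemma center_alg:
  fixes u v S R k \<phi> b :: real
  assumes "0 < u" "0 < v" "0 < S" "0 < R" "0 < k" "0 < \<phi>" "0 < b"
    and X: "v \<le> (1 - b) * u"
    and Y: "\<phi> * k * S * (b * u + v) \<le> v * R * (1 - k + \<phi> * k)"
  shows "\<phi> * b * k * S \<le> (1 - b) * ((1 - k + \<phi> * k) * R - \<phi> * k * S)"
proof -
  define B where "B = (1 - k + \<phi> * k) * R - \<phi> * k * S"
  have 1: "\<phi> * k * S * b * u \<le> v * B" using Y unfolding B_def by (simp add: algebra_simps)
  have 2: "\<phi> * k * S * b * u > 0" using assms by simp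
  have Bp: "B > 0"
  proof (rule ccontr)
    assume "\<not> B > 0" hence "v * B \<le> 0" using assms by (simp add: mult_nonneg_nonpos)
    thus False using 1 2 by linarith
  qed
  have "v * B \<le> (1 - b) * u * B" using X Bp by (simp add: mult_right_mono)
  moreover have "\<phi> * b * k * S * u = \<phi> * k * S * b * u" by (simp add: mult_ac)
  moreover have "(1 - b) * u * B = (1 - b) * B * u" by (simp add: mult_ac)
  ultimately have "(\<phi> * b * k * S) * u \<le> ((1 - b) * B) * u" using 1 by linarith
  hence "\<phi> * b * k * S \<le> (1 - b) * B" using assms(1) by (rule mult_right_le_imp_le)
  thus ?thesis unfolding B_def .
qed

lemma conv_from:
  fixes f :: "nat \<Rightarrow> real"
  assumes m: "(\<forall>t\<ge>T. f t \<le> f (Suc t)) \<or> (\<forall>t\<ge>T. f (Suc t) \<le> f t)"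
    and bd: "\<And>t. \<bar>f t\<bar> \<le> K"
  shows "convergent f"
proof -
  define g where "g n = f (n + T)" for n
  have "monoseq g"
  proof (cases "\<forall>t\<ge>T. f t \<le> f (Suc t)")
    case True
    have "\<forall>m n. m \<le> n \<longrightarrow> g m \<le> g n"
    proof (intro allI impI)
      fix m n :: nat assume "m \<le> n"
      thus "g m \<le> g n" unfolding g_def using mono_from[OF True, of "m + T" "n + T"] by simp
    qed
    thus ?thesis unfolding monoseq_def by blast
  next
    case False
    hence F: "\<forall>t\<ge>T. f (Suc t) \<le> f t" using m by blast
    have "\<forall>m n. m \<le> n \<longrightarrow> g n \<le> g m"
    proof (intro allI impI)
      fix m n :: nat assume "m \<le> n"
      thus "g n \<le> g m" unfolding g_def using antimono_from[OF F, of "m + T" "n + T"] by simp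
    qed
    thus ?thesis unfolding monoseq_def by blast
  qed
  moreover have "Bseq g" unfolding g_def by (rule BseqI'[of _ K]) (simp add: bd)
  ultimately have "convergent g" by (rule Bseq_monoseq_convergent[rotated])
  then obtain L where "g \<longlonglongrightarrow> L" unfolding convergent_def by blast
  hence "f \<longlonglongrightarrow> L" unfolding g_def by (rule LIMSEQ_offset)
  thus ?thesis unfolding convergent_def by blast
qed

lemma le_lim_from:
  fixes f :: "nat \<Rightarrow> real"
  assumes "\<forall>t\<ge>T. f t \<le> f (Suc t)" "f \<longlonglongrightarrow> L" "T \<le> r" shows "f r \<le> L"
proof (rule LIMSEQ_le_const[OF assms(2)])
  show "\<exists>N. \<forall>n\<ge>N. f r \<le> f n" using mono_from[OF assms(1) assms(3)] by blast
qed

lemma ge_lim_from: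
  fixes f :: "nat \<Rightarrow> real"
  assumes "\<forall>t\<ge>T. f (Suc t) \<le> f t" "f \<longlonglongrightarrow> L" "T \<le> r" shows "L \<le> f r"
proof (rule LIMSEQ_le_const2[OF assms(2)])
  show "\<exists>N. \<forall>n\<ge>N. f n \<le> f r" using antimono_from[OF assms(1) assms(3)] by blast
qed

lemma av_half: assumes "0 < ps + pd" shows "av ps pd Y - 1/2 = (ps - pd) / (ps + pd) * (Y - 1/2)"
  unfolding av_def using assms by (simp add: field_simps)

lemma rel_alg:
  fixes Y2 Y1 Y0 X2 X1 A1 A0 \<phi> k :: real
  shows "A1 - A0 = k * (Y1 - Y0) \<Longrightarrow> Y2 = \<phi> * X2 + (1 - \<phi>) * A1 \<Longrightarrow> Y1 = \<phi> * X1 + (1 - \<phi>) * A0 \<Longrightarrow>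
    Y2 - Y1 = \<phi> * (X2 - X1) + ((1 - \<phi>) * k) * (Y1 - Y0)"
proof -
  assume h: "A1 - A0 = k * (Y1 - Y0)" "Y2 = \<phi> * X2 + (1 - \<phi>) * A1" "Y1 = \<phi> * X1 + (1 - \<phi>) * A0"
  have "Y2 - Y1 = \<phi> * (X2 - X1) + (1 - \<phi>) * (A1 - A0)" using h(2,3) by (simp add: algebra_simps)
  thus ?thesis using h(1) by simp
qed

locale sys =
  fixes X Y :: "nat \<Rightarrow> real" and ps pd \<phi> b :: real
  assumes pd: "0 < pd" "pd < ps"
    and phi: "0 < \<phi>" "\<phi> < 1"
    and b: "0 < b" "b < 1"
    and bc: "2 / (\<phi> * (ps / pd - 1) + 2) < b"
    and X0: "1/2 < X 0" "X 0 < 1"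
    and Y0: "1/2 \<le> Y 0" "Y 0 < 1"
    and recX: "\<And>t. X (Suc t) = Fm b (X t) (av ps pd (Y t))"
    and recY: "\<And>t. Y (Suc t) = \<phi> * X (Suc t) + (1 - \<phi>) * av ps pd (Y t)"
begin

definition k where "k = (ps - pd) / (ps + pd)"
abbreviation a where "a t \<equiv> av ps pd (Y t)"

lemma k: "0 < k" "k < 1" unfolding k_def using pd by auto

lemma aeq: "av ps pd y = 1/2 + k * (y - 1/2)"
  using av_half[of ps pd y] pd unfolding k_def by simp

lemma a_bounds: assumes "1/2 \<le> y" "y \<le> 1" shows "1/2 \<le> av ps pd y" "av ps pd y \<le> ps / (ps + pd)" "ps / (ps + pd) < 1"
proof -
  show "1/2 \<le> av ps pd y" using aeq[of y] k assms by simp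
  have "ps + pd \<noteq> 0" using pd by simp
  hence "av ps pd y - ps / (ps + pd) = (ps - pd) * (y - 1) / (ps + pd)" unfolding av_def
    by (simp add: diff_divide_distrib[symmetric] algebra_simps)
  moreover have "(ps - pd) * (y - 1) \<le> 0" using pd assms by (simp add: mult_nonneg_nonpos)
  hence "(ps - pd) * (y - 1) / (ps + pd) \<le> 0" using pd by (simp add: divide_nonpos_pos)
  ultimately show "av ps pd y \<le> ps / (ps + pd)" by simp
  show "ps / (ps + pd) < 1" using pd by simp
qed

lemma inv: "1/2 < X t \<and> X t < 1 \<and> 1/2 \<le> Y t \<and> Y t < 1"
proof (induction t)
  case 0 thus ?case using X0 Y0 by simp
next
  case (Suc t)
  have a1: "1/2 \<le> a t" "a t < 1" using a_bounds[of "Y t"] Suc by auto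
  have X1: "0 < X t" "X t < 1" using Suc by auto
  have "0 < Fm b (X t) (a t)" "Fm b (X t) (a t) < 1" using Fm_pos[of "X t" "a t" b] X1 a1 by auto
  moreover have "Lo (Fm b (X t) (a t)) = b * Lo (X t) + Lo (a t)" using Lo_Fm[of "X t" "a t" b] X1 a1 by simp
  moreover have "Lo (X t) > 0" using Lo_pos Suc by auto
  hence "b * Lo (X t) > 0" using b by simp
  moreover have "Lo (a t) \<ge> 0" using a1 Lo_le_iff[of "1/2" "a t"] by simp
  ultimately have "1/2 < Fm b (X t) (a t)" using Lo_le_iff[of "Fm b (X t) (a t)" "1/2"] b by (auto simp: not_le[symmetric])
  hence "1/2 < X (Suc t)" "X (Suc t) < 1" using recX \<open>Fm b (X t) (a t) < 1\<close> by auto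
  moreover have "1/2 \<le> Y (Suc t)" "Y (Suc t) < 1"
  proof -
    have "Y (Suc t) = \<phi> * X (Suc t) + (1 - \<phi>) * a t" by (rule recY)
    moreover have "\<phi> * X (Suc t) \<ge> \<phi> * (1/2)" "\<phi> * X (Suc t) < \<phi> * 1" using phi \<open>1/2 < X (Suc t)\<close> \<open>X (Suc t) < 1\<close> by auto
    moreover have "(1 - \<phi>) * a t \<ge> (1 - \<phi>) * (1/2)" "(1 - \<phi>) * a t \<le> (1 - \<phi>) * 1" using phi a1 by auto
    moreover have "\<phi> * (1/2) + (1 - \<phi>) * (1/2) = 1/2" "\<phi> * 1 + (1 - \<phi>) * 1 = 1" by (simp_all add: field_simps)
    ultimately show "1/2 \<le> Y (Suc t)" "Y (Suc t) < 1" by linarith+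
  qed
  ultimately show ?case by simp
qed

lemma Ypos: "1/2 < Y (Suc t)"
proof -
  have "1/2 < X (Suc t)" "1/2 \<le> a t" using inv[of "Suc t"] inv[of t] a_bounds[of "Y t"] by auto
  hence "\<phi> * X (Suc t) > \<phi> * (1/2)" "(1 - \<phi>) * a t \<ge> (1 - \<phi>) * (1/2)" using phi by auto
  moreover have "\<phi> * (1/2) + (1 - \<phi>) * (1/2) = 1/2" by (simp add: field_simps)
  ultimately show ?thesis using recY[of t] by linarith
qed

lemma a01: "0 < a t" "a t < 1" using a_bounds[of "Y t"] inv[of t] by auto
lemma X01: "0 < X t" "X t < 1" using inv[of t] by auto

lemma LoX: "Lo (X (Suc t)) = b * Lo (X t) + Lo (a t)"
  using recX[of t] Lo_Fm[OF X01 a01] by simp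

lemma a_mono: "y1 \<le> y2 \<Longrightarrow> av ps pd y1 \<le> av ps pd y2"
  using aeq[of y1] aeq[of y2] k by (simp add: mult_left_mono)

lemma step_mono:
  assumes "X t \<le> X s" "Y t \<le> Y s"
  shows "X (Suc t) \<le> X (Suc s) \<and> Y (Suc t) \<le> Y (Suc s)"
proof -
  have "a t \<le> a s" using a_mono assms by simp
  hence 1: "X (Suc t) \<le> X (Suc s)" unfolding recX using Fm_mono[of "X t" "X s" "a t" "a s" b] X01 a01 assms b by simp
  have "\<phi> * X (Suc t) \<le> \<phi> * X (Suc s)" using 1 phi by (intro mult_left_mono) auto
  moreover have "(1 - \<phi>) * a t \<le> (1 - \<phi>) * a s" using \<open>a t \<le> a s\<close> phi by (intro mult_left_mono) auto
  ultimately have "Y (Suc t) \<le> Y (Suc s)" using recY[of t] recY[of s] by linarith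
  thus ?thesis using 1 by simp
qed

lemma rel: "Y (Suc (Suc t)) - Y (Suc t) = \<phi> * (X (Suc (Suc t)) - X (Suc t)) + ((1 - \<phi>) * k) * (Y (Suc t) - Y t)"
proof -
  have "a (Suc t) - a t = k * (Y (Suc t) - Y t)" using aeq[of "Y t"] aeq[of "Y (Suc t)"] by (simp add: algebra_simps)
  thus ?thesis using recY[of "Suc t"] recY[of t] rel_alg by blast
qed

lemma ev_mono: "\<exists>T. ((\<forall>t\<ge>T. X t \<le> X (Suc t)) \<or> (\<forall>t\<ge>T. X (Suc t) \<le> X t)) \<and>
             ((\<forall>t\<ge>T. Y t \<le> Y (Suc t)) \<or> (\<forall>t\<ge>T. Y (Suc t) \<le> Y t))"
proof (rule eventually_monotone_pair[of X Y \<phi> "(1 - \<phi>) * k"])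
  show "\<And>t. X t \<le> X (Suc t) \<Longrightarrow> Y t \<le> Y (Suc t) \<Longrightarrow> X (Suc t) \<le> X (Suc (Suc t)) \<and> Y (Suc t) \<le> Y (Suc (Suc t))"
    using step_mono by blast
  show "\<And>t. X (Suc t) \<le> X t \<Longrightarrow> Y (Suc t) \<le> Y t \<Longrightarrow> X (Suc (Suc t)) \<le> X (Suc t) \<and> Y (Suc (Suc t)) \<le> Y (Suc t)"
    using step_mono by blast
  show "\<And>t. Y (Suc (Suc t)) - Y (Suc t) = \<phi> * (X (Suc (Suc t)) - X (Suc t)) + ((1 - \<phi>) * k) * (Y (Suc t) - Y t)"
    by (rule rel)
  show "0 < \<phi>" using phi by simp
  show "0 < (1 - \<phi>) * k" using phi k by simp
qed

end


lemma Yshift: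
  fixes Y' X' A k y \<phi> :: real
  shows "Y' = \<phi> * X' + (1 - \<phi>) * A \<Longrightarrow> A = 1/2 + k * (y - 1/2) \<Longrightarrow>
    Y' - 1/2 = \<phi> * (X' - 1/2) + (1 - \<phi>) * (k * (y - 1/2))"
proof -
  assume h: "Y' = \<phi> * X' + (1 - \<phi>) * A" "A = 1/2 + k * (y - 1/2)"
  have "Y' - 1/2 = \<phi> * X' + (1 - \<phi>) * (1/2 + k * (y - 1/2)) - 1/2" using h by simp
  also have "\<dots> = \<phi> * (X' - 1/2) + (1 - \<phi>) * (k * (y - 1/2))" by (simp add: field_simps)
  finally show ?thesis .
qed

lemma center_alg2:
  fixes p' R b u v k q S \<phi> :: real
  assumes "p' * R = b * u + v" "v = k * q * S" "\<phi> * p' + (1 - \<phi>) * (k * q) \<le> q"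
    and "0 < k" "0 < S" "0 < R"
  shows "\<phi> * k * S * (b * u + v) \<le> v * R * (1 - k + \<phi> * k)"
proof -
  have "(\<phi> * p' + (1 - \<phi>) * (k * q)) * (k * S * R) \<le> q * (k * S * R)"
    using assms by (intro mult_right_mono) auto
  moreover have "(\<phi> * p' + (1 - \<phi>) * (k * q)) * (k * S * R) = \<phi> * k * S * (p' * R) + (1 - \<phi>) * k * R * (k * q * S)"
    by (simp add: algebra_simps)
  moreover have "q * (k * S * R) = R * (k * q * S)" by (simp add: algebra_simps)
  ultimately have "\<phi> * k * S * (b * u + v) + (1 - \<phi>) * k * R * v \<le> R * v" using assms(1,2) by simp
  moreover have "v * R * (1 - k + \<phi> * k) = R * v - (1 - \<phi>) * k * R * v" by (simp add: algebra_simps)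
  ultimately show ?thesis by linarith
qed

context sys begin

lemma convX: "convergent X" and convY: "convergent Y"
proof -
  obtain T where T: "((\<forall>t\<ge>T. X t \<le> X (Suc t)) \<or> (\<forall>t\<ge>T. X (Suc t) \<le> X t))"
       "((\<forall>t\<ge>T. Y t \<le> Y (Suc t)) \<or> (\<forall>t\<ge>T. Y (Suc t) \<le> Y t))" using ev_mono by blast
  have "\<bar>X t\<bar> \<le> 1" "\<bar>Y t\<bar> \<le> 1" for t using inv[of t] by auto
  thus "convergent X" "convergent Y" using conv_from[OF T(1), of 1] conv_from[OF T(2), of 1] by auto
qed

definition "Xs = lim X"
definition "Ys = lim Y"

lemma limX: "X \<longlonglongrightarrow> Xs" using convX unfolding Xs_def by (simp add: convergent_LIMSEQ_iff)
lemma limY: "Y \<longlonglongrightarrow> Ys" using convY unfolding Ys_def by (simp add: convergent_LIMSEQ_iff)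

lemma Xs_ge: "1/2 \<le> Xs" using LIMSEQ_le_const[OF limX, of "1/2"] inv by (auto intro: less_imp_le)
lemma Ys_b: "1/2 \<le> Ys" "Ys \<le> 1"
  using LIMSEQ_le_const[OF limY, of "1/2"] LIMSEQ_le_const2[OF limY, of 1] inv by (auto intro: less_imp_le)

lemma Xs_lt: "Xs < 1"
proof -
  obtain T where T: "((\<forall>t\<ge>T. X t \<le> X (Suc t)) \<or> (\<forall>t\<ge>T. X (Suc t) \<le> X t))" using ev_mono by blast
  thus ?thesis
  proof
    assume "\<forall>t\<ge>T. X (Suc t) \<le> X t"
    hence "Xs \<le> X T" using ge_lim_from[OF _ limX] by blast
    thus ?thesis using inv[of T] by simp
  next
    assume up: "\<forall>t\<ge>T. X t \<le> X (Suc t)"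
    define M where "M = Lo (ps / (ps + pd))"
    define e where "e = exp (M / (1 - b))"
    define \<theta> where "\<theta> = e / (1 + e)"
    have e: "e > 0" unfolding e_def by simp
    have th: "0 < \<theta>" "\<theta> < 1" unfolding \<theta>_def using e by auto
    have "1 - \<theta> = 1 / (1 + e)" unfolding \<theta>_def using e by (simp add: field_simps)
    hence "Lo \<theta> = ln e" unfolding Lo_def \<theta>_def using e by (simp add: ln_div)
    hence Lth: "Lo \<theta> = M / (1 - b)" unfolding e_def by simp
    have "X t \<le> \<theta>" if "T \<le> t" for t
    proof -
      have "Lo (X t) \<le> Lo (X (Suc t))" using up that Lo_le_iff X01 by blast
      hence 1: "(1 - b) * Lo (X t) \<le> Lo (a t)" using LoX[of t] by (simp add: algebra_simps)
      have "a t \<le> ps / (ps + pd)" "ps / (ps + pd) < 1" using a_bounds[of "Y t"] inv[of t] by auto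
      hence "Lo (a t) \<le> M" unfolding M_def using Lo_le_iff a01 pd by (smt (verit) divide_pos_pos)
      hence "(1 - b) * Lo (X t) \<le> M" using 1 by linarith
      hence "Lo (X t) \<le> M / (1 - b)" using b by (simp add: pos_le_divide_eq mult.commute)
      thus ?thesis using Lth Lo_le_iff[of "X t" \<theta>] X01 th by simp
    qed
    hence "Xs \<le> \<theta>" using LIMSEQ_le_const2[OF limX] by blast
    thus ?thesis using th by simp
  qed
qed

lemma a_lim: "(\<lambda>t. a t) \<longlonglongrightarrow> av ps pd Ys"
proof -
  have "(\<lambda>t. 1/2 + k * (Y t - 1/2)) \<longlonglongrightarrow> 1/2 + k * (Ys - 1/2)"
    by (intro tendsto_add tendsto_const tendsto_mult tendsto_diff limY)
  thus ?thesis using aeq by simp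
qed

lemma aYs: "0 < av ps pd Ys" "av ps pd Ys < 1"
  using a_bounds[of Ys] Ys_b by auto

lemma fixX: "Lo Xs = b * Lo Xs + Lo (av ps pd Ys)"
proof -
  have 1: "(\<lambda>t. Lo (X (Suc t))) \<longlonglongrightarrow> Lo Xs"
    using tendsto_Lo[OF limX[THEN LIMSEQ_Suc]] Xs_ge Xs_lt by simp
  have "(\<lambda>t. b * Lo (X t) + Lo (a t)) \<longlonglongrightarrow> b * Lo Xs + Lo (av ps pd Ys)"
    using tendsto_Lo[OF limX] tendsto_Lo[OF a_lim] Xs_ge Xs_lt aYs
    by (intro tendsto_add tendsto_mult tendsto_const) auto
  hence "(\<lambda>t. Lo (X (Suc t))) \<longlonglongrightarrow> b * Lo Xs + Lo (av ps pd Ys)" using LoX by simp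
  thus ?thesis using 1 LIMSEQ_unique by blast
qed

lemma fixY: "Ys = \<phi> * Xs + (1 - \<phi>) * av ps pd Ys"
proof -
  have "(\<lambda>t. \<phi> * X (Suc t) + (1 - \<phi>) * a t) \<longlonglongrightarrow> \<phi> * Xs + (1 - \<phi>) * av ps pd Ys"
    by (intro tendsto_add tendsto_mult tendsto_const a_lim limX[THEN LIMSEQ_Suc])
  hence "(\<lambda>t. Y (Suc t)) \<longlonglongrightarrow> \<phi> * Xs + (1 - \<phi>) * av ps pd Ys" using recY by simp
  thus ?thesis using limY[THEN LIMSEQ_Suc] LIMSEQ_unique by blast
qed


lemma bc': "(1 - b) * (1 - k) - \<phi> * b * k < 0"
proof -
  have "ps / pd - 1 > 0" using pd by simp
  hence "\<phi> * (ps / pd - 1) > 0" using phi by simp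
  hence den: "\<phi> * (ps / pd - 1) + 2 > 0" by linarith
  hence "2 < b * (\<phi> * (ps / pd - 1) + 2)" using bc by (simp add: divide_less_eq mult.commute)
  hence "2 * pd < b * (\<phi> * (ps - pd) + 2 * pd)" using pd by (simp add: field_simps)
  moreover have "(1 - b) * (1 - k) - \<phi> * b * k = (2 * pd - b * (\<phi> * (ps - pd) + 2 * pd)) / (ps + pd)"
  proof -
    have nz: "ps + pd \<noteq> 0" using pd by simp
    have "1 - k = 2 * pd / (ps + pd)" unfolding k_def using nz by (simp add: field_simps)
    hence "(1 - b) * (1 - k) - \<phi> * b * k = (1 - b) * (2 * pd) / (ps + pd) - \<phi> * b * (ps - pd) / (ps + pd)"
      unfolding k_def by simp
    also have "\<dots> = (2 * pd - b * (\<phi> * (ps - pd) + 2 * pd)) / (ps + pd)"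
      by (simp add: diff_divide_distrib[symmetric] algebra_simps)
    finally show ?thesis .
  qed
  ultimately show ?thesis using pd by (simp add: divide_neg_pos)
qed

lemma not_center: "Xs \<noteq> 1/2"
proof
  assume Xh: "Xs = 1/2"
  have "Lo (av ps pd Ys) = 0" using fixX Xh by simp
  hence "av ps pd Ys = 1/2" using Lo_inj[of "av ps pd Ys" "1/2"] aYs by simp
  hence Yh: "Ys = 1/2" using aeq[of Ys] k by simp
  obtain T where T: "((\<forall>t\<ge>T. X t \<le> X (Suc t)) \<or> (\<forall>t\<ge>T. X (Suc t) \<le> X t))"
       "((\<forall>t\<ge>T. Y t \<le> Y (Suc t)) \<or> (\<forall>t\<ge>T. Y (Suc t) \<le> Y t))" using ev_mono by blast
  have dX: "\<forall>t\<ge>T. X (Suc t) \<le> X t"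
  proof -
    { assume "\<forall>t\<ge>T. X t \<le> X (Suc t)"
      hence "X T \<le> Xs" using le_lim_from[OF _ limX] by blast
      hence False using inv[of T] Xh by simp }
    thus ?thesis using T(1) by blast
  qed
  have dY: "\<forall>t\<ge>T. Y (Suc t) \<le> Y t"
  proof -
    { assume "\<forall>t\<ge>T. Y t \<le> Y (Suc t)"
      hence "Y (Suc T) \<le> Ys" using le_lim_from[OF _ limY, of T "Suc T"] by simp
      hence False using Ypos[of T] Yh by simp }
    thus ?thesis using T(2) by blast
  qed
  define p where "p t = X t - 1/2" for t
  define q where "q t = Y t - 1/2" for t
  define Q where "Q t = (1 - b) * ((1 - k + \<phi> * k) * rho (p (Suc t)) - \<phi> * k * rho (k * q t)) - \<phi> * b * k * rho (k * q t)" for t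
  have pb: "0 < p t" "p t < 1/2" for t unfolding p_def using inv[of t] by auto
  have qb: "0 < k * q t" "k * q t < 1/2" if t1: "1 \<le> t" for t
  proof -
    obtain s where s: "t = Suc s" using t1 by (cases t) auto
    have "0 < q t" "q t < 1/2" unfolding q_def using Ypos[of s] inv[of t] s by auto
    moreover have "k * q t < 1 * (1/2)" using k \<open>q t < 1/2\<close> \<open>0 < q t\<close> by (intro mult_strict_mono) auto
    ultimately show "0 < k * q t" "k * q t < 1/2" using k by auto
  qed
  have Qpos: "0 \<le> Q t" if t: "Suc T \<le> t" for t
  proof -
    define u where "u = p t * rho (p t)"
    define v where "v = k * q t * rho (k * q t)"
    define S where "S = rho (k * q t)"
    define R where "R = rho (p (Suc t))"
    have kq: "0 < k * q t" "k * q t < 1/2" using qb[of t] t by auto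
    have S: "0 < S" unfolding S_def using rho_pos kq by auto
    have R: "0 < R" unfolding R_def using rho_pos pb by auto
    have u: "0 < u" unfolding u_def using rho_pos pb by auto
    have v: "0 < v" unfolding v_def using rho_pos kq by auto
    have L1: "Lo (X t) = 4 * u" unfolding u_def using rho_eq[of "p t"] pb[of t] unfolding p_def by simp
    have r: "Lo (1/2 + k * q t) = 4 * (k * q t) * rho (k * q t)" by (rule rho_eq) (use kq in force)
    have "a t = 1/2 + k * q t" unfolding q_def by (rule aeq)
    hence L2: "Lo (a t) = 4 * v" unfolding v_def using r by (simp add: mult.assoc)
    have L3: "Lo (X (Suc t)) = 4 * (p (Suc t) * R)" unfolding R_def using rho_eq[of "p (Suc t)"] pb[of "Suc t"] unfolding p_def by simp
    have E: "p (Suc t) * R = b * u + v" using LoX[of t] L1 L2 L3 by simp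
    have "Lo (X (Suc t)) \<le> Lo (X t)" using dX t Lo_le_iff X01 by auto
    hence Xc: "v \<le> (1 - b) * u" using LoX[of t] L1 L2 by (simp add: algebra_simps)
    have "Y (Suc t) \<le> Y t" using dY t by auto
    moreover have "Y (Suc t) - 1/2 = \<phi> * p (Suc t) + (1 - \<phi>) * (k * q t)"
      unfolding p_def q_def using recY[of t] aeq[of "Y t"] Yshift by blast
    ultimately have "\<phi> * p (Suc t) + (1 - \<phi>) * (k * q t) \<le> q t"
      unfolding q_def by linarith
    hence Yc: "\<phi> * k * S * (b * u + v) \<le> v * R * (1 - k + \<phi> * k)"
      using center_alg2[of "p (Suc t)" R b u v k "q t" S \<phi>] E k S R unfolding v_def S_def by simp
    have "\<phi> * b * k * S \<le> (1 - b) * ((1 - k + \<phi> * k) * R - \<phi> * k * S)"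
      using center_alg[OF u v S R k(1) phi(1) b(1) Xc Yc] .
    thus ?thesis unfolding Q_def R_def S_def by simp
  qed
  have p0: "(\<lambda>t. p (Suc t)) \<longlonglongrightarrow> 0"
    using tendsto_diff[OF limX[THEN LIMSEQ_Suc] tendsto_const[of "1/2"]] Xh unfolding p_def by simp
  have "filterlim (\<lambda>t. p (Suc t)) (at_right 0) sequentially"
    using pb by (intro tendsto_imp_filterlim_at_right[OF p0]) auto
  hence R1: "(\<lambda>t. rho (p (Suc t))) \<longlonglongrightarrow> 1" by (rule filterlim_compose[OF rho_lim])
  have q0: "(\<lambda>t. k * q t) \<longlonglongrightarrow> 0"
    using tendsto_mult[OF tendsto_const[of k] tendsto_diff[OF limY tendsto_const[of "1/2"]]] Yh unfolding q_def by simp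
  have "eventually (\<lambda>t. 0 < k * q t) sequentially"
    using qb unfolding eventually_sequentially by blast
  hence "filterlim (\<lambda>t. k * q t) (at_right 0) sequentially"
    by (intro tendsto_imp_filterlim_at_right[OF q0])
  hence S1: "(\<lambda>t. rho (k * q t)) \<longlonglongrightarrow> 1" by (rule filterlim_compose[OF rho_lim])
  have "Q \<longlonglongrightarrow> (1 - b) * ((1 - k + \<phi> * k) * 1 - \<phi> * k * 1) - \<phi> * b * k * 1"
    unfolding Q_def by (intro tendsto_diff tendsto_mult tendsto_const R1 S1)
  hence "0 \<le> (1 - b) * ((1 - k + \<phi> * k) * 1 - \<phi> * k * 1) - \<phi> * b * k * 1"
    using Qpos by (intro LIMSEQ_le_const) auto
  thus False using bc' by (simp add: algebra_simps)
qed

lemma final: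
  "x_hat \<phi> (ps / pd) b = Xs"
  "Ys = (\<phi> * (ps / pd + 1) * Xs + 1 - \<phi>) / (\<phi> * (ps / pd) + 2 - \<phi>)"
proof -
  define c where "c = \<phi> * (ps / pd - 1)"
  have c: "0 < c" unfolding c_def using phi pd by simp
  have Xg: "1/2 < Xs" using Xs_ge not_center by simp
  define A where "A = av ps pd Ys"
  have A1: "A * (ps + pd) = ps * Ys + pd * (1 - Ys)" unfolding A_def av_def using pd by simp
  have A2: "Ys = \<phi> * Xs + (1 - \<phi>) * A" using fixY unfolding A_def .
  have "A * (2 * pd + \<phi> * (ps - pd)) = pd + \<phi> * (ps - pd) * Xs"
  proof -
    have "A * (ps + pd) = pd + (ps - pd) * (\<phi> * Xs + (1 - \<phi>) * A)" using A1 A2 by (simp add: algebra_simps)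
    thus ?thesis by (simp add: algebra_simps)
  qed
  hence "A * (2 + c) = 1 + c * Xs" unfolding c_def using pd by (simp add: field_simps)
  hence Aeq: "A = (1 + c * Xs) / (2 + c)" using c by (simp add: field_simps)
  have A1m: "1 - A = (1 + c * (1 - Xs)) / (2 + c)" unfolding Aeq using c by (simp add: field_simps)
  have p1: "0 < 1 + c * Xs" "0 < 1 + c * (1 - Xs)" using c Xg Xs_lt by (auto intro!: add_pos_nonneg)
  have l1: "ln A = ln (1 + c * Xs) - ln (2 + c)" unfolding Aeq using p1 c by (simp add: ln_div)
  have l2: "ln (1 - A) = ln (1 + c * (1 - Xs)) - ln (2 + c)" unfolding A1m using p1 c by (simp add: ln_div)
  have "Lo A = ln (1 + c * Xs) - ln (1 + c * (1 - Xs))"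
    unfolding Lo_def l1 l2 by simp
  moreover have "(1 - b) * Lo Xs = Lo A" using fixX unfolding A_def by (simp add: algebra_simps)
  ultimately have D: "Dfun c (1 - b) Xs = 0" unfolding Dfun_def Lo_def by simp
  show "x_hat \<phi> (ps / pd) b = Xs"
    unfolding x_hat_def c_def[symmetric]
  proof (rule the_equality)
    show "1/2 < Xs \<and> Xs < 1 \<and> g_fun Xs b = c" using Xg Xs_lt g_fun_iff[of b Xs c] b c D by simp
    fix x assume "1/2 < x \<and> x < 1 \<and> g_fun x b = c"
    hence "1/2 < x" "x < 1" "Dfun c (1 - b) x = 0" using g_fun_iff[of b x c] b c by auto
    thus "x = Xs" using Dfun_unique[of c "1 - b" x Xs] c b Xg Xs_lt D by simp
  qed
  show "Ys = (\<phi> * (ps / pd + 1) * Xs + 1 - \<phi>) / (\<phi> * (ps / pd) + 2 - \<phi>)"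
  proof -
    define h where "h = ps / pd"
    have ch: "c = \<phi> * (h - 1)" unfolding c_def h_def ..
    have "2 + c = \<phi> * (ps / pd) + 2 - \<phi>" unfolding c_def by (simp add: algebra_simps)
    have "Ys * (2 + c) = \<phi> * Xs * (2 + c) + (1 - \<phi>) * (1 + c * Xs)"
      using A2 Aeq c by (simp add: field_simps)
    also have "\<dots> = \<phi> * (h + 1) * Xs + 1 - \<phi>" unfolding ch by (simp add: algebra_simps)
    also have "\<dots> = \<phi> * (ps / pd + 1) * Xs + 1 - \<phi>" unfolding h_def ..
    finally show ?thesis using c \<open>2 + c = _\<close> by (simp add: eq_divide_eq)
  qed
qed

end


primrec orb :: "real \<Rightarrow> real \<Rightarrow> real \<Rightarrow> real \<Rightarrow> real \<Rightarrow> real \<Rightarrow> nat \<Rightarrow> real \<times> real" where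
  "orb b \<phi> ps pd x0 y0 0 = (x0, y0)"
| "orb b \<phi> ps pd x0 y0 (Suc t) =
     (Fm b (fst (orb b \<phi> ps pd x0 y0 t)) (av ps pd (snd (orb b \<phi> ps pd x0 y0 t))),
      \<phi> * Fm b (fst (orb b \<phi> ps pd x0 y0 t)) (av ps pd (snd (orb b \<phi> ps pd x0 y0 t)))
        + (1 - \<phi>) * av ps pd (snd (orb b \<phi> ps pd x0 y0 t)))"

lemma dyn_at:
  assumes "dual_opinion_dynamics E V b \<phi> x y" "i \<in> V"
  shows "x (Suc t) i = (x t i powr b * (\<Sum>j\<in>nbrs E V i. y t j)) /
           (x t i powr b * (\<Sum>j\<in>nbrs E V i. y t j) + (1 - x t i) powr b * (real (card (nbrs E V i)) - (\<Sum>j\<in>nbrs E V i. y t j)))"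
    "y (Suc t) i = \<phi> * x (Suc t) i + (1 - \<phi>) * ((\<Sum>j\<in>nbrs E V i. y t j) / real (card (nbrs E V i)))"
  using assms unfolding dual_opinion_dynamics_def Let_def by auto

lemma nbrs_split: "nbrs E (V1 \<union> V2) i = nbrs E V1 i \<union> nbrs E V2 i"
  unfolding nbrs_def by auto

lemma scale_frac:
  fixes A B D a :: real
  assumes "D \<noteq> 0"
  shows "A * (D * a) / (A * (D * a) + B * (D * (1 - a))) = A * a / (A * a + B * (1 - a))"
proof -
  have "A * (D * a) = D * (A * a)" "A * (D * a) + B * (D * (1 - a)) = D * (A * a + B * (1 - a))"
    by (simp_all add: algebra_simps)
  thus ?thesis using assms by simp
qed

lemma Fm_sym:
  assumes "0 < X" "X < 1" "0 < a" "a < 1"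
  shows "Fm b (1 - X) (1 - a) = 1 - Fm b X a"
  using Fm_pos(3)[OF assms, of b] unfolding Fm_def by (simp add: add.commute)

lemma graph_reduction:
  fixes E :: "'a \<Rightarrow> 'a \<Rightarrow> bool" and X Y :: "nat \<Rightarrow> real"
  assumes G: "two_island E V1 V2 n ps pd"
    and init1: "\<forall>i\<in>V1. x 0 i = X 0 \<and> y 0 i = Y 0"
    and init2: "\<forall>j\<in>V2. x 0 j = 1 - X 0 \<and> y 0 j = 1 - Y 0"
    and dyn: "dual_opinion_dynamics E (V1 \<union> V2) b \<phi> x y"
    and recX: "\<And>t. X (Suc t) = Fm b (X t) (av ps pd (Y t))"
    and recY: "\<And>t. Y (Suc t) = \<phi> * X (Suc t) + (1 - \<phi>) * av ps pd (Y t)"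
    and bnd: "\<And>t. 0 < X t \<and> X t < 1 \<and> 0 < av ps pd (Y t) \<and> av ps pd (Y t) < 1"
  shows "(\<forall>i\<in>V1. x t i = X t \<and> y t i = Y t) \<and> (\<forall>j\<in>V2. x t j = 1 - X t \<and> y t j = 1 - Y t)"
proof (induction t)
  case 0 thus ?case using init1 init2 by simp
next
  case (Suc t)
  from G have fin: "finite V1" "finite V2" and disj: "V1 \<inter> V2 = {}"
    and c1: "\<forall>i\<in>V1. real (card (nbrs E V1 i)) = real n * ps \<and> real (card (nbrs E V2 i)) = real n * pd"
    and c2: "\<forall>i\<in>V2. real (card (nbrs E V2 i)) = real n * ps \<and> real (card (nbrs E V1 i)) = real n * pd"
    and n1: "n \<ge> 1" and pp: "0 < pd" "pd < ps"
    unfolding two_island_def by auto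
  define D where "D = real n * (ps + pd)"
  have D: "D > 0" unfolding D_def using n1 pp by simp
  define A where "A = av ps pd (Y t)"
  have fN: "finite (nbrs E V1 i)" "finite (nbrs E V2 i)" for i
    using fin unfolding nbrs_def by auto
  have dN: "nbrs E V1 i \<inter> nbrs E V2 i = {}" for i using disj unfolding nbrs_def by auto
  have sumN: "(\<Sum>j\<in>nbrs E (V1 \<union> V2) i. y t j) = (\<Sum>j\<in>nbrs E V1 i. y t j) + (\<Sum>j\<in>nbrs E V2 i. y t j)" for i
    unfolding nbrs_split using fN dN by (simp add: sum.union_disjoint)
  have cardN: "real (card (nbrs E (V1 \<union> V2) i)) = real (card (nbrs E V1 i)) + real (card (nbrs E V2 i))" for i
    unfolding nbrs_split using fN dN by (simp add: card_Un_disjoint)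
  have s1: "(\<Sum>j\<in>nbrs E V1 i. y t j) = real (card (nbrs E V1 i)) * Y t" for i
  proof -
    have "(\<Sum>j\<in>nbrs E V1 i. y t j) = (\<Sum>j\<in>nbrs E V1 i. Y t)"
      using Suc.IH unfolding nbrs_def by (intro sum.cong) auto
    thus ?thesis by simp
  qed
  have s2: "(\<Sum>j\<in>nbrs E V2 i. y t j) = real (card (nbrs E V2 i)) * (1 - Y t)" for i
  proof -
    have "(\<Sum>j\<in>nbrs E V2 i. y t j) = (\<Sum>j\<in>nbrs E V2 i. 1 - Y t)"
      using Suc.IH unfolding nbrs_def by (intro sum.cong) auto
    thus ?thesis by simp
  qed
  have Aeq: "A = (ps * Y t + pd * (1 - Y t)) / (ps + pd)" unfolding A_def av_def ..
  have DA: "D * A = real n * ps * Y t + real n * pd * (1 - Y t)"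
    unfolding D_def Aeq using pp by (simp add: field_simps)
  have DA1: "D * (1 - A) = real n * ps * (1 - Y t) + real n * pd * Y t"
    using DA unfolding D_def by (simp add: algebra_simps)
  have bX: "0 < X t" "X t < 1" "0 < A" "A < 1" using bnd[of t] unfolding A_def by auto
  have V1case: "x (Suc t) i = X (Suc t) \<and> y (Suc t) i = Y (Suc t)" if i: "i \<in> V1" for i
  proof -
    have xi: "x t i = X t" using Suc.IH i by auto
    have S: "(\<Sum>j\<in>nbrs E (V1 \<union> V2) i. y t j) = D * A"
      using sumN[of i] s1[of i] s2[of i] c1 i DA by simp
    have C: "real (card (nbrs E (V1 \<union> V2) i)) = D" using cardN[of i] c1 i unfolding D_def by (simp add: algebra_simps)
    have dm: "D - D * A = D * (1 - A)" by (simp add: algebra_simps)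
    have "x (Suc t) i = (X t powr b * (D * A)) / (X t powr b * (D * A) + (1 - X t) powr b * (D * (1 - A)))"
      using dyn_at(1)[OF dyn, of i t] i xi S C dm by simp
    also have "\<dots> = Fm b (X t) A" unfolding Fm_def using scale_frac D by simp
    finally have 1: "x (Suc t) i = X (Suc t)" using recX[of t] unfolding A_def by simp
    have "y (Suc t) i = \<phi> * x (Suc t) i + (1 - \<phi>) * (D * A / D)"
      using dyn_at(2)[OF dyn, of i t] i S C by simp
    hence "y (Suc t) i = Y (Suc t)" using 1 recY[of t] D unfolding A_def by simp
    thus ?thesis using 1 by simp
  qed
  have V2case: "x (Suc t) j = 1 - X (Suc t) \<and> y (Suc t) j = 1 - Y (Suc t)" if j: "j \<in> V2" for j
  proof -
    have xj: "x t j = 1 - X t" using Suc.IH j by auto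
    have S: "(\<Sum>j'\<in>nbrs E (V1 \<union> V2) j. y t j') = D * (1 - A)"
      using sumN[of j] s1[of j] s2[of j] c2 j DA1 by (simp add: algebra_simps)
    have C: "real (card (nbrs E (V1 \<union> V2) j)) = D" using cardN[of j] c2 j unfolding D_def by (simp add: algebra_simps)
    have dm: "D - D * (1 - A) = D * (1 - (1 - A))" by (simp add: algebra_simps)
    have "x (Suc t) j = ((1 - X t) powr b * (D * (1 - A))) / ((1 - X t) powr b * (D * (1 - A)) + (1 - (1 - X t)) powr b * (D * (1 - (1 - A))))"
      using dyn_at(1)[OF dyn, of j t] j xj S C dm by simp
    also have "\<dots> = Fm b (1 - X t) (1 - A)" unfolding Fm_def
      using scale_frac[of D "(1 - X t) powr b" "1 - A" "X t powr b"] D by simp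
    also have "\<dots> = 1 - Fm b (X t) A" using Fm_sym bX by simp
    finally have 1: "x (Suc t) j = 1 - X (Suc t)" using recX[of t] unfolding A_def by simp
    have "y (Suc t) j = \<phi> * x (Suc t) j + (1 - \<phi>) * (D * (1 - A) / D)"
      using dyn_at(2)[OF dyn, of j t] j S C by simp
    hence "y (Suc t) j = \<phi> * (1 - X (Suc t)) + (1 - \<phi>) * (1 - A)" using 1 D by simp
    hence "y (Suc t) j = 1 - Y (Suc t)" using recY[of t] unfolding A_def by (simp add: algebra_simps)
    thus ?thesis using 1 by simp
  qed
  show ?case using V1case V2case by blast
qed


lemma mono_on_from:
  fixes f :: "nat \<Rightarrow> real"
  assumes "\<forall>t\<ge>T. f t \<le> f (Suc t)" shows "mono_on {t. t > Suc T} f"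
  by (rule monotone_onI) (use mono_from[OF assms] in auto)

lemma antimono_on_from:
  fixes f :: "nat \<Rightarrow> real"
  assumes "\<forall>t\<ge>T. f (Suc t) \<le> f t" shows "antimono_on {t. t > Suc T} f"
  by (rule monotone_onI) (use antimono_from[OF assms] in auto)

theorem theorem3:
  fixes E :: "'a \<Rightarrow> 'a \<Rightarrow> bool" and V1 V2 :: "'a set" and n :: nat
    and ps pd \<phi> b x0 y0 :: real and x y :: "nat \<Rightarrow> 'a \<Rightarrow> real"
  assumes G: "two_island E V1 V2 n ps pd"
    and phi: "0 < \<phi>" "\<phi> < 1"
    and b: "2 / (\<phi> * (ps / pd - 1) + 2) < b" "b < 1"
    and x0: "1/2 < x0" "x0 < 1"
    and y0: "1/2 \<le> y0" "y0 \<le> x0"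
    and init1: "\<forall>i\<in>V1. x 0 i = x0 \<and> y 0 i = y0"
    and init2: "\<forall>j\<in>V2. x 0 j = 1 - x0 \<and> y 0 j = 1 - y0"
    and dyn: "dual_opinion_dynamics E (V1 \<union> V2) b \<phi> x y"
  shows "\<forall>i\<in>V1.
     (\<exists>\<tau>::nat. \<tau> > 0 \<and>
        (mono_on {t. t > \<tau>} (\<lambda>t. x t i) \<or> antimono_on {t. t > \<tau>} (\<lambda>t. x t i)) \<and>
        (mono_on {t. t > \<tau>} (\<lambda>t. y t i) \<or> antimono_on {t. t > \<tau>} (\<lambda>t. y t i))) \<and>
     (\<lambda>t. x t i) \<longlonglongrightarrow> x_hat \<phi> (ps / pd) b \<and>
     (\<lambda>t. y t i) \<longlonglongrightarrow>
        (\<phi> * (ps / pd + 1) * x_hat \<phi> (ps / pd) b + 1 - \<phi>) / (\<phi> * (ps / pd) + 2 - \<phi>)"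
proof -
  define X where "X t = fst (orb b \<phi> ps pd x0 y0 t)" for t
  define Y where "Y t = snd (orb b \<phi> ps pd x0 y0 t)" for t
  have recX: "\<And>t. X (Suc t) = Fm b (X t) (av ps pd (Y t))" unfolding X_def Y_def by simp
  have recY: "\<And>t. Y (Suc t) = \<phi> * X (Suc t) + (1 - \<phi>) * av ps pd (Y t)" unfolding X_def Y_def by simp
  have X0: "X 0 = x0" "Y 0 = y0" unfolding X_def Y_def by simp_all
  have pdps: "0 < pd" "pd < ps" using G unfolding two_island_def by auto
  have "ps / pd - 1 > 0" using pdps by simp
  hence "\<phi> * (ps / pd - 1) + 2 > 0" using phi by (simp add: add_pos_pos)
  hence "0 < 2 / (\<phi> * (ps / pd - 1) + 2)" by simp
  hence b0: "0 < b" using b by linarith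
  interpret S: sys X Y ps pd \<phi> b
    using pdps phi b0 b x0 y0 recX recY X0 by unfold_locales auto
  have red: "\<And>t. (\<forall>i\<in>V1. x t i = X t \<and> y t i = Y t) \<and> (\<forall>j\<in>V2. x t j = 1 - X t \<and> y t j = 1 - Y t)"
  proof -
    fix t
    have i1: "\<forall>i\<in>V1. x 0 i = X 0 \<and> y 0 i = Y 0" using init1 X0 by simp
    have i2: "\<forall>j\<in>V2. x 0 j = 1 - X 0 \<and> y 0 j = 1 - Y 0" using init2 X0 by simp
    have bd: "\<And>t. 0 < X t \<and> X t < 1 \<and> 0 < av ps pd (Y t) \<and> av ps pd (Y t) < 1"
      using S.X01 S.a01 by auto
    show "(\<forall>i\<in>V1. x t i = X t \<and> y t i = Y t) \<and> (\<forall>j\<in>V2. x t j = 1 - X t \<and> y t j = 1 - Y t)"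
      using graph_reduction[where X=X and Y=Y and x=x and y=y, OF G i1 i2 dyn recX recY bd] by blast
  qed
  obtain T where T: "((\<forall>t\<ge>T. X t \<le> X (Suc t)) \<or> (\<forall>t\<ge>T. X (Suc t) \<le> X t))"
       "((\<forall>t\<ge>T. Y t \<le> Y (Suc t)) \<or> (\<forall>t\<ge>T. Y (Suc t) \<le> Y t))" using S.ev_mono by blast
  show ?thesis
  proof
    fix i assume i: "i \<in> V1"
    have ex: "(\<lambda>t. x t i) = X" "(\<lambda>t. y t i) = Y" using red i by auto
    have "(mono_on {t. t > Suc T} X \<or> antimono_on {t. t > Suc T} X)"
      using T(1) mono_on_from antimono_on_from by blast
    moreover have "(mono_on {t. t > Suc T} Y \<or> antimono_on {t. t > Suc T} Y)"
      using T(2) mono_on_from antimono_on_from by blast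
    ultimately have M: "\<exists>\<tau>::nat. \<tau> > 0 \<and>
        (mono_on {t. t > \<tau>} (\<lambda>t. x t i) \<or> antimono_on {t. t > \<tau>} (\<lambda>t. x t i)) \<and>
        (mono_on {t. t > \<tau>} (\<lambda>t. y t i) \<or> antimono_on {t. t > \<tau>} (\<lambda>t. y t i))"
      unfolding ex by (intro exI[of _ "Suc T"]) auto
    show "(\<exists>\<tau>::nat. \<tau> > 0 \<and>
        (mono_on {t. t > \<tau>} (\<lambda>t. x t i) \<or> antimono_on {t. t > \<tau>} (\<lambda>t. x t i)) \<and>
        (mono_on {t. t > \<tau>} (\<lambda>t. y t i) \<or> antimono_on {t. t > \<tau>} (\<lambda>t. y t i))) \<and>
     (\<lambda>t. x t i) \<longlonglongrightarrow> x_hat \<phi> (ps / pd) b \<and>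
     (\<lambda>t. y t i) \<longlonglongrightarrow>
        (\<phi> * (ps / pd + 1) * x_hat \<phi> (ps / pd) b + 1 - \<phi>) / (\<phi> * (ps / pd) + 2 - \<phi>)"
      using M S.limX S.limY S.final unfolding ex by simp
  qed
qed


end
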